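(* Let $p$ be prime, $\mathbb{F}=\mathbb{F}_p$, $1\le k\le n\le N$, $y_1,\dots,y_k\in\mathbb{F}^N$, $0\le m\le n-k$ and $1\le j_1<\dots<j_m\le N$. Let $a$ be the coefficient of the monomial $x_{j_1}\cdots x_{j_m}$ in the (multilinear) polynomial $(S_n)_{y_1\dots y_k}(x)$, where $S_n(x)=\sum_{T\subseteq[N],|T|=n}\prod_{i\in T}x_i$. Then, with $T=\{j_1,\dots,j_m\}$: (1) $a=\sum_{\ell_1,\dots,\ell_k\ge1,\ \sum_i\ell_i=n-m}\mathcal{H}^{T}\big(y_1^{(\ell_1)},\dots,y_k^{(\ell_k)}\big)$; (2) if $k+m+p>n+1$, then $a=\sum_{\ell_1,\dots,\ell_k\ge1,\ \sum_i\ell_i=n-m}\Big(\prod_{i=1}^k\ell_i!\Big)^{-1}\mathcal{S}^{T}\big(y_1^{(\ell_1)},\dots,y_k^{(\ell_k)}\big)$, the inverse taken in $\mathbb{F}_p$.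
   Context: Directional derivatives: $f_y(x)=f(x+y)-f(x)$, iterated. For vectors $r_1,\dots,r_k\in\mathbb{F}^N$, integers $\ell_t\ge0$ with $\sum\ell_t=L$, and $T\subseteq[N]$, let $[N]\setminus T=\{c_1<c_2<\dots\}$ and define $\mathcal{H}^T(r_1^{(\ell_1)},\dots,r_k^{(\ell_k)})=\sum_{j_1<\dots<j_L,\ j_i\in[N]\setminus T}\sum_{(\theta_1,\dots,\theta_k)}\prod_t\prod_{i\in\theta_t}r_t(j_i)$, where $(\theta_t)$ ranges over ordered partitions of $[L]$ with $|\theta_t|=\ell_t$; and $\mathcal{S}^T(r_1^{(\ell_1)},\dots,r_k^{(\ell_k)})=\sum_{\rho}\prod_{i=1}^L w_i(\rho(i))$, where $\rho$ ranges over injective maps $[L]\to[N]\setminus T$ and $(w_1,\dots,w_L)$ is the list consisting of $r_1$ repeated $\ell_1$ times, then $r_2$ repeated $\ell_2$ times, etc. ($\mathcal{S}^T$ is the sum of all permanents of $L\times L$ submatrices of the matrix with rows $w_i$ restricted to columns outside $T$.) Here $r(j)$ is the $j$-th coordinate. *)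

theory Defs
  imports Main "HOL-Library.FuncSet" "Berlekamp_Zassenhaus.Finite_Field"
begin

text \<open>Vectors in F^N are functions nat => F, only coordinates 1..N being relevant.
  Polynomial functions in x_1..x_N are functions (nat => F) => F.\<close>

definition dir_deriv :: "((nat \<Rightarrow> 'a::ab_group_add) \<Rightarrow> 'a) \<Rightarrow> (nat \<Rightarrow> 'a) \<Rightarrow> ((nat \<Rightarrow> 'a) \<Rightarrow> 'a)" where
  "dir_deriv f y = (\<lambda>x. f (\<lambda>i. x i + y i) - f x)"

definition iter_deriv :: "((nat \<Rightarrow> 'a::ab_group_add) \<Rightarrow> 'a) \<Rightarrow> (nat \<Rightarrow> 'a) list \<Rightarrow> ((nat \<Rightarrow> 'a) \<Rightarrow> 'a)" where
  "iter_deriv f ys = foldl dir_deriv f ys"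

definition elem_sym :: "nat \<Rightarrow> nat \<Rightarrow> (nat \<Rightarrow> 'a::comm_ring_1) \<Rightarrow> 'a" where
  "elem_sym N n x = (\<Sum>S\<in>{S. S \<subseteq> {1..N} \<and> card S = n}. \<Prod>i\<in>S. x i)"

definition multilin_coeffs :: "nat \<Rightarrow> ((nat \<Rightarrow> 'a::comm_ring_1) \<Rightarrow> 'a) \<Rightarrow> (nat set \<Rightarrow> 'a)" where
  "multilin_coeffs N f = (THE c. (\<forall>A. \<not> A \<subseteq> {1..N} \<longrightarrow> c A = 0) \<and>
      (\<forall>x. f x = (\<Sum>A\<in>Pow {1..N}. c A * (\<Prod>i\<in>A. x i))))"

definition multilin_coeff :: "nat \<Rightarrow> ((nat \<Rightarrow> 'a::comm_ring_1) \<Rightarrow> 'a) \<Rightarrow> nat set \<Rightarrow> 'a" where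
  "multilin_coeff N f A = multilin_coeffs N f A"

text \<open>Increasing tuples j_1<...<j_L in [N]-T are strictly monotone j on {1..L};
  ordered partitions (theta_1..theta_k) of [L] with |theta_t| = l_t.\<close>
definition H_sum :: "nat \<Rightarrow> nat set \<Rightarrow> nat \<Rightarrow> (nat \<Rightarrow> nat \<Rightarrow> 'a::comm_ring_1) \<Rightarrow> (nat \<Rightarrow> nat) \<Rightarrow> 'a" where
  "H_sum N T k r l = (let L = (\<Sum>t=1..k. l t) in
     \<Sum>j\<in>{j \<in> {1..L} \<rightarrow>\<^sub>E ({1..N} - T). strict_mono_on {1..L} j}.
       \<Sum>\<theta>\<in>{\<theta> \<in> {1..k} \<rightarrow>\<^sub>E Pow {1..L}.
               (\<Union>t\<in>{1..k}. \<theta> t) = {1..L} \<and>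
               (\<forall>t\<in>{1..k}. \<forall>s\<in>{1..k}. t \<noteq> s \<longrightarrow> \<theta> t \<inter> \<theta> s = {}) \<and>
               (\<forall>t\<in>{1..k}. card (\<theta> t) = l t)}.
         \<Prod>t\<in>{1..k}. \<Prod>i\<in>\<theta> t. r t (j i))"

text \<open>Block index: row i (1 <= i <= L) of the list w belongs to the t-th block,
  i.e. w_i = r_t where l_1+...+l_(t-1) < i <= l_1+...+l_t.\<close>
definition block_of :: "(nat \<Rightarrow> nat) \<Rightarrow> nat \<Rightarrow> nat" where
  "block_of l i = (LEAST t. i \<le> (\<Sum>s=1..t. l s))"

definition S_sum :: "nat \<Rightarrow> nat set \<Rightarrow> nat \<Rightarrow> (nat \<Rightarrow> nat \<Rightarrow> 'a::comm_ring_1) \<Rightarrow> (nat \<Rightarrow> nat) \<Rightarrow> 'a" where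
  "S_sum N T k r l = (let L = (\<Sum>t=1..k. l t) in
     \<Sum>\<rho>\<in>{\<rho> \<in> {1..L} \<rightarrow>\<^sub>E ({1..N} - T). inj_on \<rho> {1..L}}.
       \<Prod>i\<in>{1..L}. r (block_of l i) (\<rho> i))"

definition compositions :: "nat \<Rightarrow> nat \<Rightarrow> (nat \<Rightarrow> nat) set" where
  "compositions k M = {l \<in> {1..k} \<rightarrow>\<^sub>E {1..M}. (\<Sum>t=1..k. l t) = M}"

end

theory Submission
  imports Defs
begin


lemma multilin_zero:
  fixes c :: "nat set \<Rightarrow> 'a::comm_ring_1"
  assumes h: "\<And>x. (\<Sum>A\<in>Pow {1..N}. c A * (\<Prod>i\<in>A. x i)) = 0"
  shows "B \<subseteq> {1..N} \<Longrightarrow> c B = 0"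
proof (induction "card B" arbitrary: B rule: less_induct)
  case (less B)
  have fB: "finite B" using less.prems finite_subset by blast
  define x :: "nat \<Rightarrow> 'a" where "x = (\<lambda>i. if i \<in> B then 1 else 0)"
  have px: "(\<Prod>i\<in>A. x i) = (if A \<subseteq> B then 1 else 0)" if "finite A" for A
    using that unfolding x_def by (induction A rule: finite_induct) auto
  have "0 = (\<Sum>A\<in>Pow {1..N}. c A * (\<Prod>i\<in>A. x i))" using h by simp
  also have "\<dots> = (\<Sum>A\<in>Pow {1..N}. if A \<subseteq> B then c A else 0)"
    by (rule sum.cong) (auto simp: px finite_subset)
  also have "\<dots> = (\<Sum>A\<in>{A\<in>Pow {1..N}. A \<subseteq> B}. c A)"
    by (subst sum.inter_filter) auto
  also have "{A\<in>Pow {1..N}. A \<subseteq> B} = insert B (Pow B - {B})" using less.prems by auto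
  also have "(\<Sum>A\<in>insert B (Pow B - {B}). c A) = c B + (\<Sum>A\<in>Pow B - {B}. c A)"
    by (rule sum.insert) (use fB in auto)
  also have "(\<Sum>A\<in>Pow B - {B}. c A) = 0"
  proof (rule sum.neutral, rule ballI)
    fix A assume A: "A \<in> Pow B - {B}"
    then have "card A < card B" using fB by (simp add: psubset_card_mono psubsetI)
    moreover have "A \<subseteq> {1..N}" using A less.prems by blast
    ultimately show "c A = 0" using less.hyps by blast
  qed
  finally show ?case by simp
qed

lemma multilin_coeffs_eq:
  fixes c :: "nat set \<Rightarrow> 'a::comm_ring_1"
  assumes sup: "\<forall>A. \<not> A \<subseteq> {1..N} \<longrightarrow> c A = 0"
    and rep: "\<And>x. f x = (\<Sum>A\<in>Pow {1..N}. c A * (\<Prod>i\<in>A. x i))"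
  shows "multilin_coeffs N f = c"
  unfolding multilin_coeffs_def
proof (rule the_equality)
  show "(\<forall>A. \<not> A \<subseteq> {1..N} \<longrightarrow> c A = 0) \<and> (\<forall>x. f x = (\<Sum>A\<in>Pow {1..N}. c A * (\<Prod>i\<in>A. x i)))"
    using sup rep by blast
next
  fix c' :: "nat set \<Rightarrow> 'a"
  assume a: "(\<forall>A. \<not> A \<subseteq> {1..N} \<longrightarrow> c' A = 0) \<and> (\<forall>x. f x = (\<Sum>A\<in>Pow {1..N}. c' A * (\<Prod>i\<in>A. x i)))"
  have z: "(\<Sum>A\<in>Pow {1..N}. (c' A - c A) * (\<Prod>i\<in>A. x i)) = 0" for x
    using a rep[of x] by (simp add: left_diff_distrib sum_subtractf)
  show "c' = c"
  proof
    fix A show "c' A = c A"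
    proof (cases "A \<subseteq> {1..N}")
      case True then show ?thesis using multilin_zero[of "\<lambda>A. c' A - c A", OF z] by simp
    next
      case False then show ?thesis using a sup by simp
    qed
  qed
qed

lemma dir_deriv_multilin:
  fixes c :: "nat set \<Rightarrow> 'a::comm_ring_1"
  assumes rep: "\<And>x. g x = (\<Sum>A\<in>Pow {1..N}. c A * (\<Prod>i\<in>A. x i))"
  shows "dir_deriv g y x = (\<Sum>A\<in>Pow {1..N}. (\<Sum>B\<in>Pow ({1..N}-A)-{{}}. c (A\<union>B) * (\<Prod>i\<in>B. y i)) * (\<Prod>i\<in>A. x i))"
proof -
  have e1: "g (\<lambda>i. x i + y i) = (\<Sum>C\<in>Pow {1..N}. \<Sum>D\<in>Pow C. c C * ((\<Prod>i\<in>D. x i) * (\<Prod>i\<in>C - D. y i)))"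
    unfolding rep
    by (rule sum.cong) (auto simp: prod_add finite_subset sum_distrib_left)
  have e2: "(\<Sum>D\<in>Pow C. c C * ((\<Prod>i\<in>D. x i) * (\<Prod>i\<in>C - D. y i)))
       = c C * (\<Prod>i\<in>C. x i) + (\<Sum>D\<in>Pow C - {C}. c C * ((\<Prod>i\<in>D. x i) * (\<Prod>i\<in>C - D. y i)))"
    if "C \<in> Pow {1..N}" for C
    using that by (subst sum.remove[of _ C]) (auto simp: finite_subset)
  have "dir_deriv g y x = (\<Sum>C\<in>Pow {1..N}. \<Sum>D\<in>Pow C - {C}. c C * ((\<Prod>i\<in>D. x i) * (\<Prod>i\<in>C - D. y i)))"
    unfolding dir_deriv_def e1 using e2 by (simp add: rep sum.distrib)
  also have "\<dots> = (\<Sum>p\<in>Sigma (Pow {1..N}) (\<lambda>C. Pow C - {C}). c (fst p) * ((\<Prod>i\<in>snd p. x i) * (\<Prod>i\<in>fst p - snd p. y i)))"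
    by (subst sum.Sigma) (auto simp: finite_subset split_beta)
  also have "\<dots> = (\<Sum>q\<in>Sigma (Pow {1..N}) (\<lambda>A. Pow ({1..N}-A)-{{}}). c (fst q \<union> snd q) * (\<Prod>i\<in>snd q. y i) * (\<Prod>i\<in>fst q. x i))"
  proof (rule sum.reindex_bij_witness[where i="\<lambda>(A,B). (A \<union> B, A)" and j="\<lambda>(C,D). (D, C - D)"])
  qed (auto simp: Un_absorb1 Diff_partition)
  also have "\<dots> = (\<Sum>A\<in>Pow {1..N}. \<Sum>B\<in>Pow ({1..N}-A)-{{}}. c (A \<union> B) * (\<Prod>i\<in>B. y i) * (\<Prod>i\<in>A. x i))"
    by (subst sum.Sigma) (auto simp: finite_subset split_beta)
  finally show ?thesis by (simp add: sum_distrib_right)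
qed


definition Ek :: "nat \<Rightarrow> nat \<Rightarrow> nat set \<Rightarrow> (nat \<Rightarrow> nat set) set" where
  "Ek N k A = {\<beta> \<in> {1..k} \<rightarrow>\<^sub>E Pow ({1..N} - A). (\<forall>t\<in>{1..k}. \<beta> t \<noteq> {}) \<and>
      (\<forall>t\<in>{1..k}. \<forall>s\<in>{1..k}. t \<noteq> s \<longrightarrow> \<beta> t \<inter> \<beta> s = {})}"

definition Qf :: "nat \<Rightarrow> (nat \<Rightarrow> nat \<Rightarrow> 'a::comm_ring_1) \<Rightarrow> (nat \<Rightarrow> nat set) \<Rightarrow> 'a" where
  "Qf k y \<beta> = (\<Prod>t\<in>{1..k}. \<Prod>u\<in>\<beta> t. y t u)"

definition Unk :: "nat \<Rightarrow> (nat \<Rightarrow> nat set) \<Rightarrow> nat set" where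
  "Unk k \<beta> = (\<Union>t\<in>{1..k}. \<beta> t)"

lemma finite_Ek: "finite (Ek N k A)"
  unfolding Ek_def by (rule finite_subset[OF _ finite_PiE[of "{1..k}" "\<lambda>_. Pow ({1..N} - A)"]]) auto

lemma Ek_step:
  fixes c :: "nat set \<Rightarrow> 'a::comm_ring_1"
  assumes A: "A \<subseteq> {1..N}"
  shows "(\<Sum>B\<in>Pow ({1..N}-A)-{{}}. (\<Sum>\<beta>\<in>Ek N k (A\<union>B). c (A \<union> B \<union> Unk k \<beta>) * Qf k y \<beta>) * (\<Prod>i\<in>B. y (Suc k) i))
    = (\<Sum>\<beta>\<in>Ek N (Suc k) A. c (A \<union> Unk (Suc k) \<beta>) * Qf (Suc k) y \<beta>)"
proof -
  have "(\<Sum>B\<in>Pow ({1..N}-A)-{{}}. (\<Sum>\<beta>\<in>Ek N k (A\<union>B). c (A \<union> B \<union> Unk k \<beta>) * Qf k y \<beta>) * (\<Prod>i\<in>B. y (Suc k) i))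
     = (\<Sum>p\<in>Sigma (Pow ({1..N}-A)-{{}}) (\<lambda>B. Ek N k (A\<union>B)). c (A \<union> fst p \<union> Unk k (snd p)) * Qf k y (snd p) * (\<Prod>i\<in>fst p. y (Suc k) i))"
    unfolding sum_distrib_right by (subst sum.Sigma) (auto simp: finite_Ek split_beta)
  also have "\<dots> = (\<Sum>\<beta>\<in>Ek N (Suc k) A. c (A \<union> Unk (Suc k) \<beta>) * Qf (Suc k) y \<beta>)"
  proof (rule sum.reindex_bij_witness[where i="\<lambda>\<beta>. (\<beta> (Suc k), \<beta>(Suc k := undefined))" and j="\<lambda>(B,\<beta>). \<beta>(Suc k := B)"])
    fix p assume p: "p \<in> Sigma (Pow ({1..N}-A)-{{}}) (\<lambda>B. Ek N k (A\<union>B))"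
    obtain B \<beta> where pe: "p = (B, \<beta>)" by fastforce
    have B: "B \<subseteq> {1..N}-A" "B \<noteq> {}" using p pe by auto
    have be: "\<beta> \<in> {1..k} \<rightarrow>\<^sub>E Pow ({1..N} - (A \<union> B))" "\<forall>t\<in>{1..k}. \<beta> t \<noteq> {}"
       "\<forall>t\<in>{1..k}. \<forall>s\<in>{1..k}. t \<noteq> s \<longrightarrow> \<beta> t \<inter> \<beta> s = {}"
      using p pe by (auto simp: Ek_def)
    have bk: "\<beta> (Suc k) = undefined" using be(1) by (auto simp: PiE_def extensional_def)
    show "((case p of (B, \<beta>) \<Rightarrow> \<beta>(Suc k := B)) (Suc k),
        (case p of (B, \<beta>) \<Rightarrow> \<beta>(Suc k := B))(Suc k := undefined)) = p"
      using pe bk by (auto simp: fun_upd_idem)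
    show "(case p of (B, \<beta>) \<Rightarrow> \<beta>(Suc k := B)) \<in> Ek N (Suc k) A"
      unfolding pe Ek_def using be B
      by (auto simp: PiE_def Pi_def extensional_def)
    have u: "Unk (Suc k) (\<beta>(Suc k := B)) = Unk k \<beta> \<union> B"
      by (auto simp: Unk_def le_Suc_eq)
    have q: "Qf (Suc k) y (\<beta>(Suc k := B)) = Qf k y \<beta> * (\<Prod>i\<in>B. y (Suc k) i)"
      unfolding Qf_def by (simp add: prod.cl_ivl_Suc)
    show "c (A \<union> Unk (Suc k) (case p of (B, \<beta>) \<Rightarrow> \<beta>(Suc k := B))) * Qf (Suc k) y (case p of (B, \<beta>) \<Rightarrow> \<beta>(Suc k := B))
       = c (A \<union> fst p \<union> Unk k (snd p)) * Qf k y (snd p) * (\<Prod>i\<in>fst p. y (Suc k) i)"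
      using pe u q by (simp add: Un_ac mult.assoc)
  next
    fix \<beta> assume b: "\<beta> \<in> Ek N (Suc k) A"
    then have be: "\<beta> \<in> {1..Suc k} \<rightarrow>\<^sub>E Pow ({1..N} - A)" "\<forall>t\<in>{1..Suc k}. \<beta> t \<noteq> {}"
       "\<forall>t\<in>{1..Suc k}. \<forall>s\<in>{1..Suc k}. t \<noteq> s \<longrightarrow> \<beta> t \<inter> \<beta> s = {}"
      by (auto simp: Ek_def)
    show "(case (\<beta> (Suc k), \<beta>(Suc k := undefined)) of (B, \<beta>) \<Rightarrow> \<beta>(Suc k := B)) = \<beta>" by auto
    show "(\<beta> (Suc k), \<beta>(Suc k := undefined)) \<in> Sigma (Pow ({1..N}-A)-{{}}) (\<lambda>B. Ek N k (A\<union>B))"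
    proof -
      have sk: "Suc k \<in> {1..Suc k}" by simp
      have b1: "\<beta> (Suc k) \<subseteq> {1..N} - A" "\<beta> (Suc k) \<noteq> {}" using be(1,2) sk by auto
      have b2: "\<beta>(Suc k := undefined) \<in> {1..k} \<rightarrow>\<^sub>E Pow ({1..N} - (A \<union> \<beta> (Suc k)))"
      proof (rule PiE_I)
        fix t assume t: "t \<in> {1..k}"
        then have "\<beta> t \<subseteq> {1..N} - A" "\<beta> t \<inter> \<beta> (Suc k) = {}"
          using be(1) be(3)[rule_format, of t "Suc k"] by auto
        then show "(\<beta>(Suc k := undefined)) t \<in> Pow ({1..N} - (A \<union> \<beta> (Suc k)))" using t by auto
      next
        fix t assume t: "t \<notin> {1..k}"
        show "(\<beta>(Suc k := undefined)) t = undefined"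
        proof (cases "t = Suc k")
          case False then have "t \<notin> {1..Suc k}" using t by auto
          then show ?thesis using be(1) False by (auto simp: PiE_def extensional_def)
        qed simp
      qed
      have b3: "\<forall>t\<in>{1..k}. (\<beta>(Suc k := undefined)) t \<noteq> {}" using be(2) by auto
      have b4: "\<forall>t\<in>{1..k}. \<forall>s\<in>{1..k}. t \<noteq> s \<longrightarrow> (\<beta>(Suc k := undefined)) t \<inter> (\<beta>(Suc k := undefined)) s = {}"
        using be(3) by auto
      show ?thesis using b1 b2 b3 b4 unfolding Ek_def by auto
    qed
  qed
  finally show ?thesis .
qed


lemma iter_multilin:
  fixes c :: "nat set \<Rightarrow> 'a::comm_ring_1"
  assumes rep: "\<And>x. g x = (\<Sum>A\<in>Pow {1..N}. c A * (\<Prod>i\<in>A. x i))"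
  shows "iter_deriv g (map y [1..<k+1]) x = (\<Sum>A\<in>Pow {1..N}. (\<Sum>\<beta>\<in>Ek N k A. c (A \<union> Unk k \<beta>) * Qf k y \<beta>) * (\<Prod>i\<in>A. x i))"
proof (induction k arbitrary: x)
  case 0
  have e: "Ek N 0 A = {\<lambda>_. undefined}" for A by (auto simp: Ek_def)
  show ?case by (simp add: iter_deriv_def e Unk_def Qf_def rep)
next
  case (Suc k)
  have m: "map y [1..<Suc k+1] = map y [1..<k+1] @ [y (Suc k)]" by simp
  have "iter_deriv g (map y [1..<Suc k+1]) = dir_deriv (iter_deriv g (map y [1..<k+1])) (y (Suc k))"
    unfolding m iter_deriv_def by simp
  then have "iter_deriv g (map y [1..<Suc k+1]) x = (\<Sum>A\<in>Pow {1..N}. (\<Sum>B\<in>Pow ({1..N}-A)-{{}}. (\<Sum>\<beta>\<in>Ek N k (A\<union>B). c (A \<union> B \<union> Unk k \<beta>) * Qf k y \<beta>) * (\<Prod>i\<in>B. y (Suc k) i)) * (\<Prod>i\<in>A. x i))"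
    using dir_deriv_multilin[where c="\<lambda>A. \<Sum>\<beta>\<in>Ek N k A. c (A \<union> Unk k \<beta>) * Qf k y \<beta>", OF Suc.IH] by simp
  also have "\<dots> = (\<Sum>A\<in>Pow {1..N}. (\<Sum>\<beta>\<in>Ek N (Suc k) A. c (A \<union> Unk (Suc k) \<beta>) * Qf (Suc k) y \<beta>) * (\<Prod>i\<in>A. x i))"
  proof (rule sum.cong[OF refl])
    fix A assume "A \<in> Pow {1..N}"
    then show "(\<Sum>B\<in>Pow ({1..N}-A)-{{}}. (\<Sum>\<beta>\<in>Ek N k (A\<union>B). c (A \<union> B \<union> Unk k \<beta>) * Qf k y \<beta>) * (\<Prod>i\<in>B. y (Suc k) i)) * (\<Prod>i\<in>A. x i)
      = (\<Sum>\<beta>\<in>Ek N (Suc k) A. c (A \<union> Unk (Suc k) \<beta>) * Qf (Suc k) y \<beta>) * (\<Prod>i\<in>A. x i)"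
      using Ek_step[where A=A and N=N and k=k and c=c and y=y] by simp
  qed
  finally show ?case .
qed

lemma elem_sym_rep: "elem_sym N n x = (\<Sum>A\<in>Pow {1..N}. (if card A = n then 1 else 0) * (\<Prod>i\<in>A. x i))"
proof -
  have "(\<Sum>A\<in>Pow {1..N}. (if card A = n then 1 else 0) * (\<Prod>i\<in>A. x i)) = (\<Sum>A\<in>Pow {1..N}. if card A = n then (\<Prod>i\<in>A. x i) else 0)"
    by (rule sum.cong) auto
  also have "\<dots> = (\<Sum>A\<in>{A\<in>Pow {1..N}. card A = n}. \<Prod>i\<in>A. x i)"
    by (rule sum.inter_filter[symmetric]) simp
  also have "{A\<in>Pow {1..N}. card A = n} = {S. S \<subseteq> {1..N} \<and> card S = n}" by auto
  finally show ?thesis unfolding elem_sym_def by simp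
qed

lemma coeff_Ek:
  fixes y :: "nat \<Rightarrow> nat \<Rightarrow> 'a::comm_ring_1"
  assumes "T \<subseteq> {1..N}"
  shows "multilin_coeff N (iter_deriv (elem_sym N n) (map y [1..<k+1])) T
     = (\<Sum>\<beta>\<in>Ek N k T. (if card (T \<union> Unk k \<beta>) = n then 1 else 0) * Qf k y \<beta>)"
proof -
  define c where "c A = (if A \<subseteq> {1..N} then (\<Sum>\<beta>\<in>Ek N k A. (if card (A \<union> Unk k \<beta>) = n then 1 else 0) * Qf k y \<beta>) else 0)" for A
  have "multilin_coeffs N (iter_deriv (elem_sym N n) (map y [1..<k+1])) = c"
  proof (rule multilin_coeffs_eq)
    show "\<forall>A. \<not> A \<subseteq> {1..N} \<longrightarrow> c A = 0" by (simp add: c_def)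
    fix x
    show "iter_deriv (elem_sym N n) (map y [1..<k+1]) x = (\<Sum>A\<in>Pow {1..N}. c A * (\<Prod>i\<in>A. x i))"
      unfolding iter_multilin[where c="\<lambda>A. if card A = n then 1 else 0", OF elem_sym_rep]
      by (rule sum.cong) (auto simp: c_def)
  qed
  then show ?thesis using assms by (simp add: multilin_coeff_def c_def)
qed


definition Bs :: "nat \<Rightarrow> nat set \<Rightarrow> nat \<Rightarrow> (nat \<Rightarrow> nat) \<Rightarrow> (nat \<Rightarrow> nat set) set" where
  "Bs N T k l = {\<beta> \<in> {1..k} \<rightarrow>\<^sub>E Pow ({1..N} - T).
      (\<forall>t\<in>{1..k}. \<forall>s\<in>{1..k}. t \<noteq> s \<longrightarrow> \<beta> t \<inter> \<beta> s = {}) \<and> (\<forall>t\<in>{1..k}. card (\<beta> t) = l t)}"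

lemma finite_Bs: "finite (Bs N T k l)"
  unfolding Bs_def by (rule finite_subset[OF _ finite_PiE[of "{1..k}" "\<lambda>_. Pow ({1..N} - T)"]]) auto

lemma finite_compositions: "finite (compositions k M)"
  unfolding compositions_def by (rule finite_subset[OF _ finite_PiE[of "{1..k}" "\<lambda>_. {1..M}"]]) auto

lemma card_Unk:
  assumes "\<beta> \<in> {1..k} \<rightarrow>\<^sub>E Pow ({1..N} - T)"
    and "\<forall>t\<in>{1..k}. \<forall>s\<in>{1..k}. t \<noteq> s \<longrightarrow> \<beta> t \<inter> \<beta> s = {}"
  shows "card (Unk k \<beta>) = (\<Sum>t=1..k. card (\<beta> t))"
  unfolding Unk_def
proof (rule card_UN_disjoint)
  show "\<forall>i\<in>{1..k}. finite (\<beta> i)" using assms(1) by (auto intro: finite_subset)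
qed (use assms in auto)

lemma coeff_group:
  fixes y :: "nat \<Rightarrow> nat \<Rightarrow> 'a::comm_ring_1"
  assumes T: "T \<subseteq> {1..N}" and cT: "card T = m" and mn: "m \<le> n"
  shows "(\<Sum>\<beta>\<in>Ek N k T. (if card (T \<union> Unk k \<beta>) = n then 1 else 0) * Qf k y \<beta>)
     = (\<Sum>l\<in>compositions k (n - m). \<Sum>\<beta>\<in>Bs N T k l. Qf k y \<beta>)"
proof -
  define F where "F = {\<beta>\<in>Ek N k T. card (T \<union> Unk k \<beta>) = n}"
  define g where "g \<beta> = restrict (\<lambda>t. card (\<beta> t)) {1..k}" for \<beta> :: "nat \<Rightarrow> nat set"
  have fT: "finite T" using T finite_subset by blast
  have cardF: "card (T \<union> Unk k \<beta>) = m + (\<Sum>t=1..k. card (\<beta> t))"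
    if "\<beta> \<in> {1..k} \<rightarrow>\<^sub>E Pow ({1..N} - T)"
       "\<forall>t\<in>{1..k}. \<forall>s\<in>{1..k}. t \<noteq> s \<longrightarrow> \<beta> t \<inter> \<beta> s = {}" for \<beta>
  proof -
    have "T \<inter> Unk k \<beta> = {}" using that(1) by (auto simp: Unk_def)
    moreover have "finite (Unk k \<beta>)" using that(1) unfolding Unk_def by (auto intro: finite_subset)
    ultimately show ?thesis using card_Un_disjoint[OF fT] card_Unk[OF that] cT by simp
  qed
  have "(\<Sum>\<beta>\<in>Ek N k T. (if card (T \<union> Unk k \<beta>) = n then 1 else 0) * Qf k y \<beta>)
      = (\<Sum>\<beta>\<in>Ek N k T. if card (T \<union> Unk k \<beta>) = n then Qf k y \<beta> else 0)"
    by (rule sum.cong) auto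
  also have "\<dots> = (\<Sum>\<beta>\<in>F. Qf k y \<beta>)"
    unfolding F_def by (rule sum.inter_filter[symmetric]) (simp add: finite_Ek)
  also have "\<dots> = (\<Sum>l\<in>compositions k (n - m). \<Sum>\<beta>\<in>{\<beta>\<in>F. g \<beta> = l}. Qf k y \<beta>)"
  proof (rule sum.group[symmetric])
    show "finite F" unfolding F_def using finite_Ek by simp
    show "finite (compositions k (n - m))" by (rule finite_compositions)
    show "g ` F \<subseteq> compositions k (n - m)"
    proof
      fix l assume "l \<in> g ` F"
      then obtain \<beta> where b: "\<beta> \<in> F" and l: "l = g \<beta>" by blast
      have be: "\<beta> \<in> {1..k} \<rightarrow>\<^sub>E Pow ({1..N} - T)" "\<forall>t\<in>{1..k}. \<beta> t \<noteq> {}"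
         "\<forall>t\<in>{1..k}. \<forall>s\<in>{1..k}. t \<noteq> s \<longrightarrow> \<beta> t \<inter> \<beta> s = {}" "card (T \<union> Unk k \<beta>) = n"
        using b by (auto simp: F_def Ek_def)
      have s: "(\<Sum>t=1..k. card (\<beta> t)) = n - m" using cardF[OF be(1,3)] be(4) by simp
      have fin: "finite (\<beta> t)" if "t \<in> {1..k}" for t
      proof -
        have "\<beta> t \<subseteq> {1..N}" using be(1) that by (auto simp: PiE_def Pi_def)
        then show ?thesis by (rule finite_subset) simp
      qed
      have "card (\<beta> t) \<in> {1..n-m}" if t: "t \<in> {1..k}" for t
      proof -
        have "card (\<beta> t) \<ge> 1" using be(2) fin t by (simp add: Suc_leI card_gt_0_iff)
        moreover have "card (\<beta> t) \<le> (\<Sum>t=1..k. card (\<beta> t))"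
          by (rule member_le_sum) (use t in auto)
        ultimately show ?thesis using s by simp
      qed
      moreover have "(\<Sum>t=1..k. l t) = n - m" using s unfolding l g_def by simp
      ultimately show "l \<in> compositions k (n - m)" unfolding compositions_def l g_def by auto
    qed
  qed
  also have "\<dots> = (\<Sum>l\<in>compositions k (n - m). \<Sum>\<beta>\<in>Bs N T k l. Qf k y \<beta>)"
  proof (rule sum.cong[OF refl])
    fix l assume l: "l \<in> compositions k (n - m)"
    have lk: "l \<in> {1..k} \<rightarrow>\<^sub>E {1..n-m}" "(\<Sum>t=1..k. l t) = n - m" using l by (auto simp: compositions_def)
    have "{\<beta>\<in>F. g \<beta> = l} = Bs N T k l"
    proof (intro equalityI subsetI)
      fix \<beta> assume "\<beta> \<in> {\<beta>\<in>F. g \<beta> = l}"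
      then have "\<beta> \<in> F" "g \<beta> = l" by auto
      then show "\<beta> \<in> Bs N T k l" unfolding F_def Ek_def Bs_def g_def by (auto simp: restrict_def)
    next
      fix \<beta> assume b: "\<beta> \<in> Bs N T k l"
      then have be: "\<beta> \<in> {1..k} \<rightarrow>\<^sub>E Pow ({1..N} - T)"
         "\<forall>t\<in>{1..k}. \<forall>s\<in>{1..k}. t \<noteq> s \<longrightarrow> \<beta> t \<inter> \<beta> s = {}" "\<forall>t\<in>{1..k}. card (\<beta> t) = l t"
        by (auto simp: Bs_def)
      have ne: "\<forall>t\<in>{1..k}. \<beta> t \<noteq> {}"
      proof
        fix t assume t: "t \<in> {1..k}"
        then have "l t \<ge> 1" using lk(1) by auto
        moreover have "card (\<beta> t) = l t" using be(3) t by blast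
        ultimately show "\<beta> t \<noteq> {}" by auto
      qed
      have "(\<Sum>t=1..k. card (\<beta> t)) = n - m" using be(3) lk(2) by simp
      then have c: "card (T \<union> Unk k \<beta>) = n" using cardF[OF be(1,2)] mn by simp
      have gl: "g \<beta> = l"
      proof
        fix t show "g \<beta> t = l t"
          using be(3) lk(1) by (cases "t \<in> {1..k}") (auto simp: g_def PiE_def extensional_def)
      qed
      show "\<beta> \<in> {\<beta>\<in>F. g \<beta> = l}" using be ne c gl unfolding F_def Ek_def by auto
    qed
    then show "(\<Sum>\<beta>\<in>{\<beta>\<in>F. g \<beta> = l}. Qf k y \<beta>) = (\<Sum>\<beta>\<in>Bs N T k l. Qf k y \<beta>)" by simp
  qed
  finally show ?thesis .
qed

declare upt_Suc[simp del]

lemma set_upt1: "set [1..<L+1] = {1..L}" by auto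

lemma nth_map_upt1: "i < L \<Longrightarrow> map j [1..<L+1] ! i = j (Suc i)"
  by (simp del: upt_Suc)

lemma strict_mono_on_sorted:
  assumes "strict_mono_on {1..L} (j::nat \<Rightarrow> 'b::linorder)"
  shows "sorted_wrt (<) (map j [1..<L+1])"
  unfolding sorted_wrt_iff_nth_less
proof (intro allI impI)
  fix a b assume ab: "a < b" "b < length (map j [1..<L+1])"
  then have b: "b < L" by (simp only: length_map length_upt)
  have "map j [1..<L+1] ! a = j (1 + a)" "map j [1..<L+1] ! b = j (1 + b)"
    using ab b by (simp_all add: nth_map_upt1)
  moreover have "j (1 + a) < j (1 + b)"
    using assms ab b unfolding strict_mono_on_def by auto
  ultimately show "map j [1..<L+1] ! a < map j [1..<L+1] ! b" by simp
qed

lemma strict_mono_eq: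
  assumes "strict_mono_on {1..L} (j1::nat \<Rightarrow> 'b::linorder)" "strict_mono_on {1..L} j2"
    "j1 ` {1..L} = j2 ` {1..L}" "i \<in> {1..L}"
  shows "j1 i = j2 i"
proof -
  have "map j1 [1..<L+1] = map j2 [1..<L+1]"
    by (rule strict_sorted_equal[OF strict_mono_on_sorted[OF assms(2)] strict_mono_on_sorted[OF assms(1)]])
       (use assms(3) in \<open>simp only: set_map set_upt1\<close>)
  then have "map j1 [1..<L+1] ! (i - 1) = map j2 [1..<L+1] ! (i - 1)" by (rule arg_cong[where f="\<lambda>xs. xs ! (i - 1)"])
  moreover have "map j1 [1..<L+1] ! (i - 1) = j1 (1 + (i - 1))" "map j2 [1..<L+1] ! (i - 1) = j2 (1 + (i - 1))"
    using assms(4) by (auto simp: nth_map_upt1)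
  ultimately show ?thesis using assms(4) by simp
qed

lemma strict_mono_subsets:
  fixes X :: "nat set"
  assumes "finite X"
  shows "bij_betw (\<lambda>j. j ` {1..L}) {j \<in> {1..L} \<rightarrow>\<^sub>E X. strict_mono_on {1..L} j} {U. U \<subseteq> X \<and> card U = L}"
proof (rule bij_betwI')
  fix j1 j2 assume j1: "j1 \<in> {j \<in> {1..L} \<rightarrow>\<^sub>E X. strict_mono_on {1..L} j}" and j2: "j2 \<in> {j \<in> {1..L} \<rightarrow>\<^sub>E X. strict_mono_on {1..L} j}"
  show "(j1 ` {1..L} = j2 ` {1..L}) = (j1 = j2)"
  proof
    assume e: "j1 ` {1..L} = j2 ` {1..L}"
    show "j1 = j2"
    proof
      fix i show "j1 i = j2 i"
      proof (cases "i \<in> {1..L}")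
        case True then show ?thesis using strict_mono_eq[OF _ _ e] j1 j2 by auto
      next
        case False then show ?thesis using j1 j2 by (auto simp: PiE_def extensional_def)
      qed
    qed
  qed simp
next
  fix j assume j: "j \<in> {j \<in> {1..L} \<rightarrow>\<^sub>E X. strict_mono_on {1..L} j}"
  then have "inj_on j {1..L}" using strict_mono_on_imp_inj_on by blast
  then show "j ` {1..L} \<in> {U. U \<subseteq> X \<and> card U = L}" using j by (auto simp: card_image)
next
  fix U assume U: "U \<in> {U. U \<subseteq> X \<and> card U = L}"
  define xs where "xs = sorted_list_of_set U"
  have fU: "finite U" using U assms finite_subset by blast
  have xs: "sorted_wrt (<) xs" "set xs = U" "length xs = L"
    using U fU by (auto simp: xs_def)
  define j where "j i = (if i \<in> {1..L} then xs ! (i - 1) else undefined)" for i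
  have im: "j ` {1..L} = U"
  proof
    show "j ` {1..L} \<subseteq> U" using xs by (auto simp: j_def)
    show "U \<subseteq> j ` {1..L}"
    proof
      fix u assume "u \<in> U"
      then obtain q where q: "q < L" "xs ! q = u" using xs by (metis in_set_conv_nth)
      then have "j (q + 1) = u" by (simp add: j_def)
      then show "u \<in> j ` {1..L}" using q by force
    qed
  qed
  have "j \<in> {1..L} \<rightarrow>\<^sub>E X" using im U by (auto simp: j_def)
  moreover have "strict_mono_on {1..L} j"
    unfolding strict_mono_on_def
  proof (intro allI impI, elim conjE)
    fix r s assume rs: "r \<in> {1..L}" "s \<in> {1..L}" "r < s"
    then have "xs ! (r - 1) < xs ! (s - 1)"
      using xs by (intro sorted_wrt_nth_less[OF xs(1)]) auto
    then show "j r < j s" using rs by (simp add: j_def)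
  qed
  ultimately show "\<exists>j\<in>{j \<in> {1..L} \<rightarrow>\<^sub>E X. strict_mono_on {1..L} j}. U = j ` {1..L}"
    using im by blast
qed
declare upt_Suc[simp]


lemma H_inner:
  fixes y :: "nat \<Rightarrow> nat \<Rightarrow> 'a::comm_ring_1"
  assumes jX: "j \<in> {1..L} \<rightarrow>\<^sub>E ({1..N} - T)" and ij: "inj_on j {1..L}"
  shows "(\<Sum>\<theta>\<in>{\<theta> \<in> {1..k} \<rightarrow>\<^sub>E Pow {1..L}.
               (\<Union>t\<in>{1..k}. \<theta> t) = {1..L} \<and>
               (\<forall>t\<in>{1..k}. \<forall>s\<in>{1..k}. t \<noteq> s \<longrightarrow> \<theta> t \<inter> \<theta> s = {}) \<and>
               (\<forall>t\<in>{1..k}. card (\<theta> t) = l t)}.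
         \<Prod>t\<in>{1..k}. \<Prod>i\<in>\<theta> t. y t (j i))
     = (\<Sum>\<beta>\<in>{\<beta>\<in>Bs N T k l. Unk k \<beta> = j ` {1..L}}. Qf k y \<beta>)"
proof (rule sum.reindex_bij_witness[where j="\<lambda>\<theta>. restrict (\<lambda>t. j ` \<theta> t) {1..k}"
      and i="\<lambda>\<beta>. restrict (\<lambda>t. {i\<in>{1..L}. j i \<in> \<beta> t}) {1..k}"])
  fix \<theta> assume "\<theta> \<in> {\<theta> \<in> {1..k} \<rightarrow>\<^sub>E Pow {1..L}.
               (\<Union>t\<in>{1..k}. \<theta> t) = {1..L} \<and>
               (\<forall>t\<in>{1..k}. \<forall>s\<in>{1..k}. t \<noteq> s \<longrightarrow> \<theta> t \<inter> \<theta> s = {}) \<and>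
               (\<forall>t\<in>{1..k}. card (\<theta> t) = l t)}"
  then have th: "\<theta> \<in> {1..k} \<rightarrow>\<^sub>E Pow {1..L}" "(\<Union>t\<in>{1..k}. \<theta> t) = {1..L}"
    "\<forall>t\<in>{1..k}. \<forall>s\<in>{1..k}. t \<noteq> s \<longrightarrow> \<theta> t \<inter> \<theta> s = {}" "\<forall>t\<in>{1..k}. card (\<theta> t) = l t"
    by auto
  have sub: "\<theta> t \<subseteq> {1..L}" if "t \<in> {1..k}" for t using th(1) that by auto
  have injt: "inj_on j (\<theta> t)" if "t \<in> {1..k}" for t using inj_on_subset[OF ij sub[OF that]] .
  show "restrict (\<lambda>t. {i\<in>{1..L}. j i \<in> restrict (\<lambda>t. j ` \<theta> t) {1..k} t}) {1..k} = \<theta>"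
  proof
    fix t show "restrict (\<lambda>t. {i\<in>{1..L}. j i \<in> restrict (\<lambda>t. j ` \<theta> t) {1..k} t}) {1..k} t = \<theta> t"
    proof (cases "t \<in> {1..k}")
      case True
      have "{i\<in>{1..L}. j i \<in> j ` \<theta> t} = \<theta> t"
        using sub[OF True] inj_on_image_mem_iff[OF ij] by auto
      then show ?thesis using True by simp
    next
      case False then show ?thesis using th(1) by (auto simp: PiE_def extensional_def)
    qed
  qed
  have un: "Unk k (restrict (\<lambda>t. j ` \<theta> t) {1..k}) = j ` {1..L}"
  proof -
    have "Unk k (restrict (\<lambda>t. j ` \<theta> t) {1..k}) = (\<Union>t\<in>{1..k}. j ` \<theta> t)" by (simp add: Unk_def)
    also have "\<dots> = j ` (\<Union>t\<in>{1..k}. \<theta> t)" by (rule image_UN[symmetric])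
    finally show ?thesis using th(2) by simp
  qed
  have dis: "\<forall>t\<in>{1..k}. \<forall>s\<in>{1..k}. t \<noteq> s \<longrightarrow> j ` \<theta> t \<inter> j ` \<theta> s = {}"
  proof (intro ballI impI)
    fix t s assume "t \<in> {1..k}" "s \<in> {1..k}" "t \<noteq> s"
    then have "\<theta> t \<inter> \<theta> s = {}" using th(3) by blast
    moreover have "j ` (\<theta> t \<inter> \<theta> s) = j ` \<theta> t \<inter> j ` \<theta> s"
      by (rule inj_on_image_Int[OF ij sub sub]) fact+
    ultimately show "j ` \<theta> t \<inter> j ` \<theta> s = {}" by simp
  qed
  have "restrict (\<lambda>t. j ` \<theta> t) {1..k} \<in> Bs N T k l"
  proof -
    have "j ` \<theta> t \<subseteq> {1..N} - T" if "t \<in> {1..k}" for t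
      using sub[OF that] jX by (auto simp: PiE_def Pi_def)
    then show ?thesis
      unfolding Bs_def using dis th(4) card_image[OF injt] by auto
  qed
  then show "restrict (\<lambda>t. j ` \<theta> t) {1..k} \<in> {\<beta>\<in>Bs N T k l. Unk k \<beta> = j ` {1..L}}" using un by simp
  show "Qf k y (restrict (\<lambda>t. j ` \<theta> t) {1..k}) = (\<Prod>t\<in>{1..k}. \<Prod>i\<in>\<theta> t. y t (j i))"
    unfolding Qf_def
  proof (rule prod.cong[OF refl])
    fix t assume t: "t \<in> {1..k}"
    show "(\<Prod>u\<in>restrict (\<lambda>t. j ` \<theta> t) {1..k} t. y t u) = (\<Prod>i\<in>\<theta> t. y t (j i))"
      using t prod.reindex[OF injt[OF t], of "y t"] by simp
  qed
next
  fix \<beta> assume "\<beta> \<in> {\<beta>\<in>Bs N T k l. Unk k \<beta> = j ` {1..L}}"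
  then have be: "\<beta> \<in> {1..k} \<rightarrow>\<^sub>E Pow ({1..N} - T)"
      "\<forall>t\<in>{1..k}. \<forall>s\<in>{1..k}. t \<noteq> s \<longrightarrow> \<beta> t \<inter> \<beta> s = {}" "\<forall>t\<in>{1..k}. card (\<beta> t) = l t"
      "Unk k \<beta> = j ` {1..L}"
    by (auto simp: Bs_def)
  have bsub: "\<beta> t \<subseteq> j ` {1..L}" if "t \<in> {1..k}" for t using be(4) that unfolding Unk_def by auto
  have im: "j ` {i\<in>{1..L}. j i \<in> \<beta> t} = \<beta> t" if "t \<in> {1..k}" for t using bsub[OF that] by auto
  show "restrict (\<lambda>t. j ` restrict (\<lambda>t. {i\<in>{1..L}. j i \<in> \<beta> t}) {1..k} t) {1..k} = \<beta>"
  proof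
    fix t show "restrict (\<lambda>t. j ` restrict (\<lambda>t. {i\<in>{1..L}. j i \<in> \<beta> t}) {1..k} t) {1..k} t = \<beta> t"
      using im be(1) by (cases "t \<in> {1..k}") (auto simp: PiE_def extensional_def)
  qed
  have c: "card {i\<in>{1..L}. j i \<in> \<beta> t} = l t" if t: "t \<in> {1..k}" for t
  proof -
    have "card (j ` {i\<in>{1..L}. j i \<in> \<beta> t}) = card {i\<in>{1..L}. j i \<in> \<beta> t}"
      by (rule card_image) (rule inj_on_subset[OF ij], auto)
    then show ?thesis using im[OF t] be(3) t by simp
  qed
  have u: "(\<Union>t\<in>{1..k}. {i\<in>{1..L}. j i \<in> \<beta> t}) = {1..L}"
  proof
    show "{1..L} \<subseteq> (\<Union>t\<in>{1..k}. {i\<in>{1..L}. j i \<in> \<beta> t})"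
    proof
      fix i assume i: "i \<in> {1..L}"
      then have "j i \<in> Unk k \<beta>" using be(4) by auto
      then obtain t where "t \<in> {1..k}" "j i \<in> \<beta> t" unfolding Unk_def by auto
      then show "i \<in> (\<Union>t\<in>{1..k}. {i\<in>{1..L}. j i \<in> \<beta> t})" using i by auto
    qed
  qed auto
  show "restrict (\<lambda>t. {i\<in>{1..L}. j i \<in> \<beta> t}) {1..k} \<in> {\<theta> \<in> {1..k} \<rightarrow>\<^sub>E Pow {1..L}.
               (\<Union>t\<in>{1..k}. \<theta> t) = {1..L} \<and>
               (\<forall>t\<in>{1..k}. \<forall>s\<in>{1..k}. t \<noteq> s \<longrightarrow> \<theta> t \<inter> \<theta> s = {}) \<and>
               (\<forall>t\<in>{1..k}. card (\<theta> t) = l t)}"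
  proof -
    have d: "\<forall>t\<in>{1..k}. \<forall>s\<in>{1..k}. t \<noteq> s \<longrightarrow> {i\<in>{1..L}. j i \<in> \<beta> t} \<inter> {i\<in>{1..L}. j i \<in> \<beta> s} = {}"
      using be(2) by blast
    have p: "restrict (\<lambda>t. {i\<in>{1..L}. j i \<in> \<beta> t}) {1..k} \<in> {1..k} \<rightarrow>\<^sub>E Pow {1..L}" by auto
    show ?thesis using p u c d by simp
  qed
qed

lemma H_sum_Bs:
  fixes y :: "nat \<Rightarrow> nat \<Rightarrow> 'a::comm_ring_1"
  shows "H_sum N T k y l = (\<Sum>\<beta>\<in>Bs N T k l. Qf k y \<beta>)"
proof -
  define L where "L = (\<Sum>t=1..k. l t)"
  define J where "J = {j \<in> {1..L} \<rightarrow>\<^sub>E ({1..N} - T). strict_mono_on {1..L} j}"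
  define G where "G U = (\<Sum>\<beta>\<in>{\<beta>\<in>Bs N T k l. Unk k \<beta> = U}. Qf k y \<beta>)" for U
  have "H_sum N T k y l = (\<Sum>j\<in>J. G (j ` {1..L}))"
    unfolding H_sum_def Let_def L_def[symmetric] J_def[symmetric]
  proof (rule sum.cong[OF refl])
    fix j assume "j \<in> J"
    then have "j \<in> {1..L} \<rightarrow>\<^sub>E ({1..N} - T)" "inj_on j {1..L}"
      by (auto simp: J_def strict_mono_on_imp_inj_on)
    then show "(\<Sum>\<theta>\<in>{\<theta> \<in> {1..k} \<rightarrow>\<^sub>E Pow {1..L}.
               (\<Union>t\<in>{1..k}. \<theta> t) = {1..L} \<and>
               (\<forall>t\<in>{1..k}. \<forall>s\<in>{1..k}. t \<noteq> s \<longrightarrow> \<theta> t \<inter> \<theta> s = {}) \<and>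
               (\<forall>t\<in>{1..k}. card (\<theta> t) = l t)}.
         \<Prod>t\<in>{1..k}. \<Prod>i\<in>\<theta> t. y t (j i)) = G (j ` {1..L})"
      unfolding G_def by (rule H_inner)
  qed
  also have "\<dots> = (\<Sum>U\<in>{U. U \<subseteq> {1..N} - T \<and> card U = L}. G U)"
    unfolding J_def by (rule sum.reindex_bij_betw[OF strict_mono_subsets]) simp
  also have "\<dots> = (\<Sum>\<beta>\<in>Bs N T k l. Qf k y \<beta>)"
    unfolding G_def
  proof (rule sum.group)
    show "finite (Bs N T k l)" by (rule finite_Bs)
    show "finite {U. U \<subseteq> {1..N} - T \<and> card U = L}" by simp
    show "Unk k ` Bs N T k l \<subseteq> {U. U \<subseteq> {1..N} - T \<and> card U = L}"
    proof
      fix U assume "U \<in> Unk k ` Bs N T k l"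
      then obtain \<beta> where b: "\<beta> \<in> Bs N T k l" "U = Unk k \<beta>" by blast
      have be: "\<beta> \<in> {1..k} \<rightarrow>\<^sub>E Pow ({1..N} - T)"
        "\<forall>t\<in>{1..k}. \<forall>s\<in>{1..k}. t \<noteq> s \<longrightarrow> \<beta> t \<inter> \<beta> s = {}" "\<forall>t\<in>{1..k}. card (\<beta> t) = l t"
        using b by (auto simp: Bs_def)
      have "card U = L" using card_Unk[OF be(1,2)] be(3) b(2) by (simp add: L_def)
      moreover have "U \<subseteq> {1..N} - T" using be(1) b(2) by (auto simp: Unk_def)
      ultimately show "U \<in> {U. U \<subseteq> {1..N} - T \<and> card U = L}" by simp
    qed
  qed
  finally show ?thesis .
qed


definition psum :: "(nat \<Rightarrow> nat) \<Rightarrow> nat \<Rightarrow> nat" where "psum l t = (\<Sum>s=1..t. l s)"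
definition blk :: "(nat \<Rightarrow> nat) \<Rightarrow> nat \<Rightarrow> nat set" where "blk l t = {i. psum l (t - 1) < i \<and> i \<le> psum l t}"

lemma psum_mono: "a \<le> b \<Longrightarrow> psum l a \<le> psum l b"
  unfolding psum_def by (rule sum_mono2) auto

lemma block_of_eq: assumes "t \<in> {1..k}" "i \<in> blk l t" shows "block_of l i = t"
  unfolding block_of_def
proof (rule Least_equality)
  show "i \<le> (\<Sum>s=1..t. l s)" using assms(2) by (simp add: blk_def psum_def)
  fix t' assume h: "i \<le> (\<Sum>s=1..t'. l s)"
  show "t \<le> t'"
  proof (rule ccontr)
    assume "\<not> t \<le> t'"
    then have "psum l t' \<le> psum l (t - 1)" by (intro psum_mono) simp
    then show False using h assms(2) by (simp add: blk_def psum_def)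
  qed
qed

lemma block_of_in:
  assumes "i \<in> {1..psum l k}"
  shows "block_of l i \<in> {1..k}" "i \<in> blk l (block_of l i)"
proof -
  have ex: "i \<le> (\<Sum>s=1..k. l s)" using assms by (simp add: psum_def)
  have le: "block_of l i \<le> k" unfolding block_of_def by (rule Least_le) (rule ex)
  have ge: "i \<le> psum l (block_of l i)" unfolding block_of_def psum_def by (rule LeastI) (rule ex)
  have ne: "block_of l i \<noteq> 0"
  proof
    assume "block_of l i = 0"
    then show False using ge assms by (simp add: psum_def)
  qed
  have lt: "\<not> i \<le> psum l (block_of l i - 1)"
    unfolding psum_def block_of_def
    by (rule not_less_Least) (use ne in \<open>simp add: block_of_def\<close>)
  show "block_of l i \<in> {1..k}" using le ne by auto
  show "i \<in> blk l (block_of l i)" using ge lt by (simp add: blk_def)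
qed

lemma blk_sub: "t \<in> {1..k} \<Longrightarrow> blk l t \<subseteq> {1..psum l k}"
  using psum_mono[of t k l] by (auto simp: blk_def)

lemma blk_finite: "finite (blk l t)"
  by (rule finite_subset[of _ "{..psum l t}"]) (auto simp: blk_def)

lemma card_blk: "t \<in> {1..k} \<Longrightarrow> card (blk l t) = l t"
proof -
  assume "t \<in> {1..k}"
  then obtain t' where t: "t = Suc t'" by (cases t) auto
  have "psum l t = psum l t' + l t" unfolding psum_def t by simp
  moreover have "blk l t = {psum l t'<..psum l t}" by (auto simp: blk_def t)
  ultimately show ?thesis by simp
qed

lemma blk_disj: "t \<in> {1..k} \<Longrightarrow> s \<in> {1..k} \<Longrightarrow> t \<noteq> s \<Longrightarrow> blk l t \<inter> blk l s = {}"
proof -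
  assume a: "t \<in> {1..k}" "s \<in> {1..k}" "t \<noteq> s"
  show ?thesis
  proof (rule ccontr)
    assume "blk l t \<inter> blk l s \<noteq> {}"
    then obtain i where "i \<in> blk l t" "i \<in> blk l s" by blast
    then have "block_of l i = t" "block_of l i = s" using block_of_eq a by blast+
    then show False using a by simp
  qed
qed

lemma blk_Union: "(\<Union>t\<in>{1..k}. blk l t) = {1..psum l k}"
proof
  show "(\<Union>t\<in>{1..k}. blk l t) \<subseteq> {1..psum l k}" using blk_sub by blast
  show "{1..psum l k} \<subseteq> (\<Union>t\<in>{1..k}. blk l t)"
  proof
    fix i assume "i \<in> {1..psum l k}"
    then show "i \<in> (\<Union>t\<in>{1..k}. blk l t)" using block_of_in[of i l k] by blast
  qed
qed



lemma S_prod: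
  fixes y :: "nat \<Rightarrow> nat \<Rightarrow> 'a::comm_ring_1"
  assumes "inj_on \<rho> {1..psum l k}"
  shows "(\<Prod>i\<in>{1..psum l k}. y (block_of l i) (\<rho> i)) = Qf k y (restrict (\<lambda>t. \<rho> ` blk l t) {1..k})"
proof -
  have "(\<Prod>i\<in>{1..psum l k}. y (block_of l i) (\<rho> i)) = (\<Prod>i\<in>(\<Union>t\<in>{1..k}. blk l t). y (block_of l i) (\<rho> i))"
    by (simp only: blk_Union)
  also have "\<dots> = (\<Prod>t\<in>{1..k}. \<Prod>i\<in>blk l t. y (block_of l i) (\<rho> i))"
    apply (rule prod.UNION_disjoint)
    apply simp
    apply (simp add: blk_finite)
    using blk_disj[of _ k _ l] by blast
  also have "\<dots> = Qf k y (restrict (\<lambda>t. \<rho> ` blk l t) {1..k})"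
    unfolding Qf_def
  proof (rule prod.cong[OF refl])
    fix t assume t: "t \<in> {1..k}"
    have inj: "inj_on \<rho> (blk l t)" by (rule inj_on_subset[OF assms blk_sub[OF t]])
    have "(\<Prod>i\<in>blk l t. y (block_of l i) (\<rho> i)) = (\<Prod>i\<in>blk l t. y t (\<rho> i))"
      by (rule prod.cong[OF refl]) (simp add: block_of_eq[OF t])
    also have "\<dots> = (\<Prod>u\<in>\<rho> ` blk l t. y t u)" using prod.reindex[OF inj, of "y t"] by simp
    finally show "(\<Prod>i\<in>blk l t. y (block_of l i) (\<rho> i)) = (\<Prod>u\<in>restrict (\<lambda>t. \<rho> ` blk l t) {1..k} t. y t u)"
      using t by simp
  qed
  finally show ?thesis .
qed

lemma card_inj_self:
  assumes "finite A" "finite B" "card A = card B"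
  shows "card {\<sigma> \<in> A \<rightarrow>\<^sub>E B. inj_on \<sigma> A} = fact (card A)"
  using card_inj_on_subset_funcset[OF assms(1,2) subset_refl] assms(3)
  by (simp add: fact_prod_rev)

lemma fiber_card:
  assumes b: "\<beta> \<in> Bs N T k l"
  shows "card {\<rho> \<in> {\<rho> \<in> {1..psum l k} \<rightarrow>\<^sub>E ({1..N} - T). inj_on \<rho> {1..psum l k}}.
            restrict (\<lambda>t. \<rho> ` blk l t) {1..k} = \<beta>} = (\<Prod>t=1..k. fact (l t))"
proof -
  let ?L = "psum l k"
  let ?F = "{\<rho> \<in> {\<rho> \<in> {1..?L} \<rightarrow>\<^sub>E ({1..N} - T). inj_on \<rho> {1..?L}}. restrict (\<lambda>t. \<rho> ` blk l t) {1..k} = \<beta>}"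
  let ?P = "PiE {1..k} (\<lambda>t. {\<sigma> \<in> blk l t \<rightarrow>\<^sub>E \<beta> t. inj_on \<sigma> (blk l t)})"
  have be: "\<beta> \<in> {1..k} \<rightarrow>\<^sub>E Pow ({1..N} - T)"
      "\<forall>t\<in>{1..k}. \<forall>s\<in>{1..k}. t \<noteq> s \<longrightarrow> \<beta> t \<inter> \<beta> s = {}" "\<forall>t\<in>{1..k}. card (\<beta> t) = l t"
    using b by (auto simp: Bs_def)
  have bX: "\<beta> t \<subseteq> {1..N} - T" if "t \<in> {1..k}" for t using be(1) that by auto
  have bfin: "finite (\<beta> t)" if "t \<in> {1..k}" for t using bX[OF that] finite_subset by blast
  define \<phi> where "\<phi> \<rho> = restrict (\<lambda>t. restrict \<rho> (blk l t)) {1..k}" for \<rho> :: "nat \<Rightarrow> nat"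
  define \<psi> where "\<psi> \<sigma> = (\<lambda>i. if i \<in> {1..?L} then \<sigma> (block_of l i) i else undefined)" for \<sigma> :: "nat \<Rightarrow> nat \<Rightarrow> nat"
  have "bij_betw \<phi> ?F ?P"
  proof (rule bij_betwI[where g=\<psi>])
    show "\<phi> \<in> ?F \<rightarrow> ?P"
    proof
      fix \<rho> assume r: "\<rho> \<in> ?F"
      then have rr: "\<rho> \<in> {1..?L} \<rightarrow>\<^sub>E ({1..N} - T)" "inj_on \<rho> {1..?L}" "restrict (\<lambda>t. \<rho> ` blk l t) {1..k} = \<beta>"
        by auto
      have im: "\<rho> ` blk l t = \<beta> t" if "t \<in> {1..k}" for t
        using rr(3) that by (metis restrict_apply')
      show "\<phi> \<rho> \<in> ?P"
        unfolding \<phi>_def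
      proof (rule PiE_I)
        fix t assume t: "t \<in> {1..k}"
        have "restrict \<rho> (blk l t) \<in> blk l t \<rightarrow>\<^sub>E \<beta> t" using im[OF t] by auto
        moreover have "inj_on (restrict \<rho> (blk l t)) (blk l t)"
          using inj_on_subset[OF rr(2) blk_sub[OF t]] by (simp add: inj_on_def)
        ultimately show "restrict (\<lambda>t. restrict \<rho> (blk l t)) {1..k} t \<in> {\<sigma> \<in> blk l t \<rightarrow>\<^sub>E \<beta> t. inj_on \<sigma> (blk l t)}"
          using t by simp
      qed auto
    qed
    show "\<psi> \<in> ?P \<rightarrow> ?F"
    proof
      fix \<sigma> assume s: "\<sigma> \<in> ?P"
      have st: "\<sigma> t \<in> blk l t \<rightarrow>\<^sub>E \<beta> t" "inj_on (\<sigma> t) (blk l t)" if "t \<in> {1..k}" for t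
        using s that by auto
      have psi_blk: "\<psi> \<sigma> i = \<sigma> t i" if "t \<in> {1..k}" "i \<in> blk l t" for t i
      proof -
        have "i \<in> {1..?L}" using blk_sub[OF that(1)] that(2) by blast
        then show ?thesis using block_of_eq[OF that] by (simp add: \<psi>_def)
      qed
      have im: "\<psi> \<sigma> ` blk l t = \<beta> t" if t: "t \<in> {1..k}" for t
      proof -
        have "\<psi> \<sigma> ` blk l t = \<sigma> t ` blk l t" using psi_blk[OF t] by auto
        also have "\<dots> = \<beta> t"
        proof (rule card_subset_eq)
          show "finite (\<beta> t)" by (rule bfin[OF t])
          show "\<sigma> t ` blk l t \<subseteq> \<beta> t" using st(1)[OF t] by auto
          show "card (\<sigma> t ` blk l t) = card (\<beta> t)"
            using card_image[OF st(2)[OF t]] card_blk[OF t] be(3) t by simp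
        qed
        finally show ?thesis .
      qed
      have inP: "\<psi> \<sigma> \<in> {1..?L} \<rightarrow>\<^sub>E ({1..N} - T)"
      proof (rule PiE_I)
        fix i assume i: "i \<in> {1..?L}"
        have "\<psi> \<sigma> i = \<sigma> (block_of l i) i" using i by (simp add: \<psi>_def)
        moreover have "\<sigma> (block_of l i) i \<in> \<beta> (block_of l i)"
          using st(1)[OF block_of_in(1)[OF i]] block_of_in(2)[OF i] by auto
        ultimately show "\<psi> \<sigma> i \<in> {1..N} - T" using bX[OF block_of_in(1)[OF i]] by auto
      qed (auto simp: \<psi>_def)
      have inj: "inj_on (\<psi> \<sigma>) {1..?L}"
      proof (rule inj_onI)
        fix i i' assume i: "i \<in> {1..?L}" and i': "i' \<in> {1..?L}" and e: "\<psi> \<sigma> i = \<psi> \<sigma> i'"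
        define t where "t = block_of l i"
        define t' where "t' = block_of l i'"
        have tt: "t \<in> {1..k}" "i \<in> blk l t" "t' \<in> {1..k}" "i' \<in> blk l t'"
          using block_of_in[OF i] block_of_in[OF i'] by (auto simp: t_def t'_def)
        have v: "\<psi> \<sigma> i \<in> \<beta> t" "\<psi> \<sigma> i' \<in> \<beta> t'"
          using psi_blk[OF tt(1,2)] psi_blk[OF tt(3,4)] st(1)[OF tt(1)] st(1)[OF tt(3)] tt(2,4) by auto
        have "t = t'"
        proof (rule ccontr)
          assume "t \<noteq> t'"
          then have "\<beta> t \<inter> \<beta> t' = {}" using be(2) tt(1,3) by blast
          then show False using v e by auto
        qed
        then show "i = i'"
          using e psi_blk[OF tt(1,2)] psi_blk[OF tt(3,4)] st(2)[OF tt(1)] tt(2,4)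
          by (auto simp: inj_on_def)
      qed
      have "restrict (\<lambda>t. \<psi> \<sigma> ` blk l t) {1..k} = \<beta>"
      proof
        fix t show "restrict (\<lambda>t. \<psi> \<sigma> ` blk l t) {1..k} t = \<beta> t"
          using im be(1) by (cases "t \<in> {1..k}") (auto simp: PiE_def extensional_def)
      qed
      then show "\<psi> \<sigma> \<in> ?F" using inP inj by simp
    qed
    fix \<rho> assume r: "\<rho> \<in> ?F"
    then have rr: "\<rho> \<in> {1..?L} \<rightarrow>\<^sub>E ({1..N} - T)" by auto
    show "\<psi> (\<phi> \<rho>) = \<rho>"
    proof
      fix i show "\<psi> (\<phi> \<rho>) i = \<rho> i"
      proof (cases "i \<in> {1..?L}")
        case True then show ?thesis
          using block_of_in[OF True] by (simp add: \<psi>_def \<phi>_def)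
      next
        case False then show ?thesis using rr by (auto simp: \<psi>_def PiE_def extensional_def)
      qed
    qed
  next
    fix \<sigma> assume s: "\<sigma> \<in> ?P"
    show "\<phi> (\<psi> \<sigma>) = \<sigma>"
    proof
      fix t show "\<phi> (\<psi> \<sigma>) t = \<sigma> t"
      proof (cases "t \<in> {1..k}")
        case True
        have st: "\<sigma> t \<in> blk l t \<rightarrow>\<^sub>E \<beta> t" using s True by auto
        show ?thesis
        proof
          fix i show "\<phi> (\<psi> \<sigma>) t i = \<sigma> t i"
          proof (cases "i \<in> blk l t")
            case True': True
            have iL: "i \<in> {1..psum l k}" using blk_sub[OF True] True' by blast
            then show ?thesis using True True' block_of_eq[OF True True']
              by (simp add: \<phi>_def \<psi>_def)
          next
            case False
            then show ?thesis using True st by (auto simp: \<phi>_def PiE_def extensional_def)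
          qed
        qed
      next
        case False then show ?thesis using s by (auto simp: \<phi>_def PiE_def extensional_def)
      qed
    qed
  qed
  then have "card ?F = card ?P" by (rule bij_betw_same_card)
  also have "\<dots> = (\<Prod>t=1..k. card {\<sigma> \<in> blk l t \<rightarrow>\<^sub>E \<beta> t. inj_on \<sigma> (blk l t)})" by (simp add: card_PiE)
  also have "\<dots> = (\<Prod>t=1..k. fact (l t))"
  proof (rule prod.cong[OF refl])
    fix t assume t: "t \<in> {1..k}"
    show "card {\<sigma> \<in> blk l t \<rightarrow>\<^sub>E \<beta> t. inj_on \<sigma> (blk l t)} = fact (l t)"
      using card_inj_self[OF blk_finite bfin[OF t]] card_blk[OF t] be(3) t by simp
  qed
  finally show ?thesis .
qed


lemma S_sum_Bs:
  fixes y :: "nat \<Rightarrow> nat \<Rightarrow> 'a::comm_ring_1"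
  shows "S_sum N T k y l = of_nat (\<Prod>t=1..k. fact (l t)) * (\<Sum>\<beta>\<in>Bs N T k l. Qf k y \<beta>)"
proof -
  let ?L = "psum l k"
  define R where "R = {\<rho> \<in> {1..?L} \<rightarrow>\<^sub>E ({1..N} - T). inj_on \<rho> {1..?L}}"
  define g where "g \<rho> = restrict (\<lambda>t. \<rho> ` blk l t) {1..k}" for \<rho> :: "nat \<Rightarrow> nat"
  have "S_sum N T k y l = (\<Sum>\<rho>\<in>R. \<Prod>i\<in>{1..?L}. y (block_of l i) (\<rho> i))"
    unfolding S_sum_def Let_def R_def psum_def ..
  also have "\<dots> = (\<Sum>\<rho>\<in>R. Qf k y (g \<rho>))"
  proof (rule sum.cong[OF refl])
    fix \<rho> assume "\<rho> \<in> R"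
    then have "inj_on \<rho> {1..?L}" by (simp add: R_def)
    then show "(\<Prod>i\<in>{1..?L}. y (block_of l i) (\<rho> i)) = Qf k y (g \<rho>)"
      unfolding g_def by (rule S_prod)
  qed
  also have "\<dots> = (\<Sum>\<beta>\<in>Bs N T k l. \<Sum>\<rho>\<in>{\<rho>\<in>R. g \<rho> = \<beta>}. Qf k y (g \<rho>))"
  proof (rule sum.group[symmetric])
    show "finite R" unfolding R_def
      by (rule finite_subset[OF _ finite_PiE[of "{1..?L}" "\<lambda>_. {1..N} - T"]]) auto
    show "finite (Bs N T k l)" by (rule finite_Bs)
    show "g ` R \<subseteq> Bs N T k l"
    proof
      fix \<beta> assume "\<beta> \<in> g ` R"
      then obtain \<rho> where r: "\<rho> \<in> R" "\<beta> = g \<rho>" by blast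
      have rr: "\<rho> \<in> {1..?L} \<rightarrow>\<^sub>E ({1..N} - T)" "inj_on \<rho> {1..?L}" using r by (auto simp: R_def)
      have sub: "\<rho> ` blk l t \<subseteq> {1..N} - T" if "t \<in> {1..k}" for t
      proof
        fix u assume "u \<in> \<rho> ` blk l t"
        then obtain i where i: "i \<in> blk l t" "u = \<rho> i" by blast
        have "i \<in> {1..?L}" using blk_sub[OF that, of l] i(1) by blast
        then have "\<rho> i \<in> {1..N} - T" using rr(1) by (rule PiE_mem[rotated])
        then show "u \<in> {1..N} - T" using i(2) by simp
      qed
      have dis: "\<forall>t\<in>{1..k}. \<forall>s\<in>{1..k}. t \<noteq> s \<longrightarrow> \<rho> ` blk l t \<inter> \<rho> ` blk l s = {}"
      proof (intro ballI impI)
        fix t s assume ts: "t \<in> {1..k}" "s \<in> {1..k}" "t \<noteq> s"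
        have "\<rho> ` (blk l t \<inter> blk l s) = \<rho> ` blk l t \<inter> \<rho> ` blk l s"
          by (rule inj_on_image_Int[OF rr(2) blk_sub[OF ts(1)] blk_sub[OF ts(2)]])
        then show "\<rho> ` blk l t \<inter> \<rho> ` blk l s = {}" using blk_disj[OF ts] by simp
      qed
      have cd: "card (\<rho> ` blk l t) = l t" if "t \<in> {1..k}" for t
        using card_image[OF inj_on_subset[OF rr(2) blk_sub[OF that]]] card_blk[OF that] by simp
      show "\<beta> \<in> Bs N T k l" unfolding Bs_def r(2) g_def using sub dis cd by auto
    qed
  qed
  also have "\<dots> = (\<Sum>\<beta>\<in>Bs N T k l. of_nat (\<Prod>t=1..k. fact (l t)) * Qf k y \<beta>)"
  proof (rule sum.cong[OF refl])
    fix \<beta> assume b: "\<beta> \<in> Bs N T k l"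
    have "(\<Sum>\<rho>\<in>{\<rho>\<in>R. g \<rho> = \<beta>}. Qf k y (g \<rho>)) = (\<Sum>\<rho>\<in>{\<rho>\<in>R. g \<rho> = \<beta>}. Qf k y \<beta>)" by simp
    also have "\<dots> = of_nat (card {\<rho>\<in>R. g \<rho> = \<beta>}) * Qf k y \<beta>" by simp
    also have "card {\<rho>\<in>R. g \<rho> = \<beta>} = (\<Prod>t=1..k. fact (l t))"
      using fiber_card[OF b] unfolding R_def g_def .
    finally show "(\<Sum>\<rho>\<in>{\<rho>\<in>R. g \<rho> = \<beta>}. Qf k y (g \<rho>)) = of_nat (\<Prod>t=1..k. fact (l t)) * Qf k y \<beta>" .
  qed
  also have "\<dots> = of_nat (\<Prod>t=1..k. fact (l t)) * (\<Sum>\<beta>\<in>Bs N T k l. Qf k y \<beta>)"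
    by (simp add: sum_distrib_left)
  finally show ?thesis .
qed

lemma fact_prod_nonzero:
  assumes l: "l \<in> compositions k M" and lt: "M + 1 < k + CARD('p)"
  shows "(of_nat (\<Prod>t=1..k. fact (l t)) :: 'p::prime_card mod_ring) \<noteq> 0"
proof
  assume "(of_nat (\<Prod>t=1..k. fact (l t)) :: 'p mod_ring) = 0"
  then have "CARD('p) dvd (\<Prod>t=1..k. fact (l t))" by (rule of_nat_0_mod_ring_dvd)
  moreover have pr: "prime CARD('p)" by (rule prime_card)
  ultimately obtain t where t: "t \<in> {1..k}" "CARD('p) dvd fact (l t)"
    using prime_dvd_prod_iff[OF _ pr, of "{1..k}" "\<lambda>t. fact (l t)"] by auto
  then have pl: "CARD('p) \<le> l t" using prime_dvd_fact_iff[OF pr] by auto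
  have lk: "l \<in> {1..k} \<rightarrow>\<^sub>E {1..M}" "(\<Sum>s=1..k. l s) = M" using l by (auto simp: compositions_def)
  have "(\<Sum>s=1..k. l s) = l t + (\<Sum>s\<in>{1..k}-{t}. l s)" using t(1) by (simp add: sum.remove)
  moreover have "card ({1..k}-{t}) \<le> (\<Sum>s\<in>{1..k}-{t}. l s)"
  proof -
    have "card ({1..k}-{t}) = (\<Sum>s\<in>{1..k}-{t}. 1)" by simp
    also have "\<dots> \<le> (\<Sum>s\<in>{1..k}-{t}. l s)" by (rule sum_mono) (use lk(1) in auto)
    finally show ?thesis .
  qed
  moreover have "card ({1..k}-{t}) = k - 1" using t(1) by simp
  ultimately have "l t + (k - 1) \<le> M" using lk(2) by linarith
  then show False using pl lt t(1) by auto
qed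

theorem corollary2p3:
  fixes y :: "nat \<Rightarrow> nat \<Rightarrow> 'p::prime_card mod_ring"
    and k n N m :: nat and j :: "nat \<Rightarrow> nat"
  assumes "1 \<le> k" and "k \<le> n" and "n \<le> N"
    and "m \<le> n - k"
    and "strict_mono_on {1..m} j" and "j ` {1..m} \<subseteq> {1..N}"
  shows "multilin_coeff N (iter_deriv (elem_sym N n) (map y [1..<k+1])) (j ` {1..m})
           = (\<Sum>l\<in>compositions k (n - m). H_sum N (j ` {1..m}) k y l)
       \<and> (k + m + CARD('p) > n + 1 \<longrightarrow>
           multilin_coeff N (iter_deriv (elem_sym N n) (map y [1..<k+1])) (j ` {1..m})
           = (\<Sum>l\<in>compositions k (n - m).
                inverse (of_nat (\<Prod>t=1..k. fact (l t))) * S_sum N (j ` {1..m}) k y l))"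
proof -
  let ?T = "j ` {1..m}"
  have cT: "card ?T = m"
    using card_image[OF strict_mono_on_imp_inj_on[OF assms(5)]] by simp
  have mn: "m \<le> n" using assms(4) by simp
  have a: "multilin_coeff N (iter_deriv (elem_sym N n) (map y [1..<k+1])) ?T
      = (\<Sum>l\<in>compositions k (n - m). \<Sum>\<beta>\<in>Bs N ?T k l. Qf k y \<beta>)"
    by (rule trans[OF coeff_Ek[OF assms(6)] coeff_group[OF assms(6) cT mn]])
  show ?thesis
  proof
    show "multilin_coeff N (iter_deriv (elem_sym N n) (map y [1..<k+1])) ?T
           = (\<Sum>l\<in>compositions k (n - m). H_sum N ?T k y l)"
      unfolding a by (simp add: H_sum_Bs)
    show "k + m + CARD('p) > n + 1 \<longrightarrow>
           multilin_coeff N (iter_deriv (elem_sym N n) (map y [1..<k+1])) ?T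
           = (\<Sum>l\<in>compositions k (n - m).
                inverse (of_nat (\<Prod>t=1..k. fact (l t))) * S_sum N ?T k y l)"
    proof
      assume lt: "k + m + CARD('p) > n + 1"
      show "multilin_coeff N (iter_deriv (elem_sym N n) (map y [1..<k+1])) ?T
           = (\<Sum>l\<in>compositions k (n - m).
                inverse (of_nat (\<Prod>t=1..k. fact (l t))) * S_sum N ?T k y l)"
        unfolding a
      proof (rule sum.cong[OF refl])
        fix l assume l: "l \<in> compositions k (n - m)"
        have nz: "(of_nat (\<Prod>t=1..k. fact (l t)) :: 'p mod_ring) \<noteq> 0"
          by (rule fact_prod_nonzero[OF l]) (use lt mn in linarith)
        show "(\<Sum>\<beta>\<in>Bs N ?T k l. Qf k y \<beta>) = inverse (of_nat (\<Prod>t=1..k. fact (l t))) * S_sum N ?T k y l"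
          unfolding S_sum_Bs using nz by (simp add: mult.assoc[symmetric])
      qed
    qed
  qed
qed

end
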